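(* Consider a substrate edge $(u,v)\in E_S$. Let $0<\varepsilon\le1$ be such that $d_{\max}(r,u,v)/d_S(u,v)\le\varepsilon$ for all $r\in\mathcal R$. Let $\Delta=\sum_{r\in\mathcal R}\big(A_{\max}(r,u,v)/d_{\max}(r,u,v)\big)^2$ and $\gamma=1+\varepsilon\sqrt{2\Delta\log|V_S|}$. Then $\mathbb P\big(A_{u,v}\ge\gamma\cdot d_S(u,v)\big)\le|V_S|^{-4}$.
   Context: Substrate: directed graph $G_S=(V_S,E_S)$, node types $\mathcal T$, $V_S^\tau\subseteq V_S$, resources $R_S=\{(\tau,u):u\in V_S^\tau\}\cup E_S$, capacities $d_S(x,y)>0$. Requests $r\in\mathcal R$: directed graph $G_r=(V_r,E_r)$, types $\tau_r$, demands $d_r(i),d_r(i,j)\ge0$, allowed node sets $V_S^{r,i}\subseteq V_S^{\tau_r(i)}$, allowed edge sets $E_S^{r,i,j}\subseteq E_S$. Valid mappings $m_r$ (nodes to allowed nodes, each edge $(i,j)$ to a directed path between the images within $E_S^{r,i,j}$), set $\mathcal M_r$; allocation $A(m_r,u,v)=\sum_{(i,j):(u,v)\in m^E_r(i,j)}d_r(i,j)$ for edges and $A(m_r,\tau,u)=\sum_{i:\tau_r(i)=\tau,m_r^V(i)=u}d_r(i)$ for node resources; $d_{\max}(r,u,v)=\max_{(i,j)\in E_r:(u,v)\in E_S^{r,i,j}}d_r(i,j)$; $A_{\max}(r,u,v)=\max_{m\in\mathcal M_r}A(m,u,v)$. Rounding setting (profit variant): for each request $r$ a finite family $\mathcal D_r=\{(f^k_r,m^k_r)\}_k$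 with $f^k_r>0$, $m^k_r\in\mathcal M_r$, $\sum_kf^k_r\le1$, obtained by decomposing a feasible solution of the paper's decomposable LP relaxation of the VNEP, so that in particular $\sum_r\sum_kf^k_rA(m^k_r,x,y)\le d_S(x,y)$ for all resources $(x,y)$. Independently for each $r$, $m^k_r$ is selected with probability $f^k_r$ and nothing with probability $1-\sum_kf^k_r$; $A_{u,v}$ is the total allocation of the selected mappings on $(u,v)$. *)

theory Defs
  imports "HOL-Probability.Probability"
begin

definition is_dpath :: "('v \<times> 'v) set \<Rightarrow> 'v \<Rightarrow> 'v \<Rightarrow> 'v list \<Rightarrow> bool" where
  "is_dpath E s t p \<longleftrightarrow> p \<noteq> [] \<and> hd p = s \<and> last p = t \<and> distinct p \<and> set (zip p (tl p)) \<subseteq> E"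

definition path_edges :: "'v list \<Rightarrow> ('v \<times> 'v) set" where
  "path_edges p = set (zip p (tl p))"

text \<open>A mapping: node map and edge map (each request edge to a substrate path).\<close>
type_synonym ('n, 'v) mapping = "('n \<Rightarrow> 'v) \<times> ('n \<times> 'n \<Rightarrow> 'v list)"

definition valid_mapping ::
  "('v \<times> 'v) set \<Rightarrow> 'n set \<Rightarrow> ('n \<times> 'n) set \<Rightarrow> ('n \<Rightarrow> 'v set)
   \<Rightarrow> ('n \<Rightarrow> 'n \<Rightarrow> ('v \<times> 'v) set) \<Rightarrow> ('n, 'v) mapping \<Rightarrow> bool" where
  "valid_mapping ES Vr Er Vallow Eallow m \<longleftrightarrow>
     (\<forall>i\<in>Vr. fst m i \<in> Vallow i) \<and>
     (\<forall>(i,j)\<in>Er. is_dpath (ES \<inter> Eallow i j) (fst m i) (fst m j) (snd m (i,j)))"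

definition alloc_edge :: "('n \<times> 'n) set \<Rightarrow> ('n \<times> 'n \<Rightarrow> real) \<Rightarrow> ('n, 'v) mapping \<Rightarrow> 'v \<Rightarrow> 'v \<Rightarrow> real" where
  "alloc_edge Er dE m u v = (\<Sum>e\<in>{e\<in>Er. (u,v) \<in> path_edges (snd m e)}. dE e)"

definition alloc_node :: "'n set \<Rightarrow> ('n \<Rightarrow> 't) \<Rightarrow> ('n \<Rightarrow> real) \<Rightarrow> ('n, 'v) mapping \<Rightarrow> 't \<Rightarrow> 'v \<Rightarrow> real" where
  "alloc_node Vr tau dV m ty u = (\<Sum>i\<in>{i\<in>Vr. tau i = ty \<and> fst m i = u}. dV i)"

text \<open>d_max(r,u,v); the maximum over the empty set is taken to be 0 (demands are nonnegative).\<close>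
definition d_max :: "('n \<times> 'n) set \<Rightarrow> ('n \<times> 'n \<Rightarrow> real) \<Rightarrow> ('n \<Rightarrow> 'n \<Rightarrow> ('v \<times> 'v) set) \<Rightarrow> 'v \<Rightarrow> 'v \<Rightarrow> real" where
  "d_max Er dE Eallow u v = Max (insert 0 {dE (i,j) | i j. (i,j) \<in> Er \<and> (u,v) \<in> Eallow i j})"

text \<open>A_max(r,u,v) = max over valid mappings; 0 if there is no valid mapping (allocations are nonnegative).\<close>
definition A_max ::
  "('v \<times> 'v) set \<Rightarrow> 'n set \<Rightarrow> ('n \<times> 'n) set \<Rightarrow> ('n \<Rightarrow> 'v set)
   \<Rightarrow> ('n \<Rightarrow> 'n \<Rightarrow> ('v \<times> 'v) set) \<Rightarrow> ('n \<times> 'n \<Rightarrow> real) \<Rightarrow> 'v \<Rightarrow> 'v \<Rightarrow> real" where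
  "A_max ES Vr Er Vallow Eallow dE u v =
     Max (insert 0 {alloc_edge Er dE m u v | m. valid_mapping ES Vr Er Vallow Eallow m})"

definition select_pmf :: "'k set \<Rightarrow> ('k \<Rightarrow> real) \<Rightarrow> 'k option pmf" where
  "select_pmf K f = embed_pmf (\<lambda>x. case x of
       None \<Rightarrow> 1 - (\<Sum>k\<in>K. f k)
     | Some k \<Rightarrow> (if k \<in> K then f k else 0))"

definition joint_selection :: "'r set \<Rightarrow> ('r \<Rightarrow> 'k set) \<Rightarrow> ('r \<Rightarrow> 'k \<Rightarrow> real) \<Rightarrow> ('r \<Rightarrow> 'k option) pmf" where
  "joint_selection R K f = Pi_pmf R None (\<lambda>r. select_pmf (K r) (f r))"

end

theory Submission
  imports Defs
begin



lemma pmf_select: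
  assumes fin: "finite K" and pos: "\<And>k. k \<in> K \<Longrightarrow> f k > 0" and s: "(\<Sum>k\<in>K. f k) \<le> 1"
  shows "pmf (select_pmf K f) x = (case x of None \<Rightarrow> 1 - (\<Sum>k\<in>K. f k)
     | Some k \<Rightarrow> (if k \<in> K then f k else 0))"
  unfolding select_pmf_def
proof (rule pmf_embed_pmf)
  show "\<And>x. 0 \<le> (case x of None \<Rightarrow> 1 - (\<Sum>k\<in>K. f k) | Some k \<Rightarrow> (if k \<in> K then f k else 0))"
    using pos s by (auto split: option.split simp: less_imp_le)
  let ?g = "\<lambda>x. ennreal (case x of None \<Rightarrow> 1 - (\<Sum>k\<in>K. f k) | Some k \<Rightarrow> (if k \<in> K then f k else 0))"
  have "(\<integral>\<^sup>+x. ?g x \<partial>count_space UNIV) = (\<Sum>x\<in>insert None (Some ` K). ?g x)"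
    by (rule nn_integral_count_space') (auto simp: fin split: option.split)
  also have "\<dots> = ?g None + (\<Sum>x\<in>Some ` K. ?g x)"
    by (subst sum.insert) (auto simp: fin)
  also have "(\<Sum>x\<in>Some ` K. ?g x) = (\<Sum>k\<in>K. ennreal (f k))"
    by (subst sum.reindex) (auto)
  also have "\<dots> = ennreal (\<Sum>k\<in>K. f k)"
    using pos by (subst sum_ennreal) (auto simp: less_imp_le)
  also have "?g None + ennreal (\<Sum>k\<in>K. f k) = 1"
    using s pos by (simp add: ennreal_plus[symmetric] sum_nonneg less_imp_le del: ennreal_plus)
  finally show "(\<integral>\<^sup>+x. ?g x \<partial>count_space UNIV) = 1" .
qed


lemma alloc_edge_le_dmax:
  assumes fin: "finite Er" and nn: "\<And>e. dE e \<ge> 0"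
    and val: "valid_mapping ES Vr Er Vallow Eallow m"
  shows "alloc_edge Er dE m u v \<le> real (card Er) * d_max Er dE Eallow u v"
proof -
  have finS: "finite {dE (i,j) | i j. (i,j) \<in> Er \<and> (u,v) \<in> Eallow i j}"
    by (rule finite_subset[OF _ finite_imageI[OF fin, of dE]]) auto
  have "alloc_edge Er dE m u v \<le> (\<Sum>e\<in>{e\<in>Er. (u,v) \<in> path_edges (snd m e)}. d_max Er dE Eallow u v)"
    unfolding alloc_edge_def
  proof (rule sum_mono)
    fix e assume e: "e \<in> {e\<in>Er. (u,v) \<in> path_edges (snd m e)}"
    obtain i j where ij: "e = (i,j)" by (cases e)
    have "(u,v) \<in> Eallow i j" using e val ij
      unfolding valid_mapping_def is_dpath_def path_edges_def by auto
    hence "dE e \<in> insert 0 {dE (i,j) | i j. (i,j) \<in> Er \<and> (u,v) \<in> Eallow i j}"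
      using e ij by auto
    thus "dE e \<le> d_max Er dE Eallow u v" unfolding d_max_def using finS by auto
  qed
  also have "\<dots> \<le> real (card Er) * d_max Er dE Eallow u v"
  proof -
    have dm: "d_max Er dE Eallow u v \<ge> 0" unfolding d_max_def using finS by auto
    have "card {e\<in>Er. (u,v) \<in> path_edges (snd m e)} \<le> card Er"
      by (rule card_mono[OF fin]) auto
    thus ?thesis using dm by (simp add: mult_right_mono)
  qed
  finally show ?thesis .
qed

lemma alloc_edge_le_Amax:
  assumes fin: "finite Er" and val: "valid_mapping ES Vr Er Vallow Eallow m"
  shows "alloc_edge Er dE m u v \<le> A_max ES Vr Er Vallow Eallow dE u v"
proof -
  have "{alloc_edge Er dE m u v | m. valid_mapping ES Vr Er Vallow Eallow m} \<subseteq> sum dE ` Pow Er"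
    unfolding alloc_edge_def by auto
  hence finS: "finite {alloc_edge Er dE m u v | m. valid_mapping ES Vr Er Vallow Eallow m}"
    by (rule finite_subset) (simp add: fin)
  have mem: "alloc_edge Er dE m u v \<in> insert 0 {alloc_edge Er dE m u v | m. valid_mapping ES Vr Er Vallow Eallow m}"
    using val by blast
  show ?thesis unfolding A_max_def by (rule Max_ge[OF _ mem]) (simp only: finite_insert finS)
qed

lemma Amax_le_dmax:
  assumes fin: "finite Er" and nn: "\<And>e. dE e \<ge> 0"
  shows "A_max ES Vr Er Vallow Eallow dE u v \<le> real (card Er) * d_max Er dE Eallow u v"
proof -
  have "{alloc_edge Er dE m u v | m. valid_mapping ES Vr Er Vallow Eallow m} \<subseteq> sum dE ` Pow Er"
    unfolding alloc_edge_def by auto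
  hence finS: "finite {alloc_edge Er dE m u v | m. valid_mapping ES Vr Er Vallow Eallow m}"
    by (rule finite_subset) (simp add: fin)
  have finD: "finite {dE (i,j) | i j. (i,j) \<in> Er \<and> (u,v) \<in> Eallow i j}"
    by (rule finite_subset[OF _ finite_imageI[OF fin, of dE]]) auto
  have dm: "d_max Er dE Eallow u v \<ge> 0" unfolding d_max_def using finD by auto
  show ?thesis unfolding A_max_def
  proof (rule Max.boundedI)
    show "finite (insert 0 {alloc_edge Er dE m u v | m. valid_mapping ES Vr Er Vallow Eallow m})"
      using finS by simp
  next
    fix a assume "a \<in> insert 0 {alloc_edge Er dE m u v | m. valid_mapping ES Vr Er Vallow Eallow m}"
    thus "a \<le> real (card Er) * d_max Er dE Eallow u v"
      using dm alloc_edge_le_dmax[OF fin nn] by auto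
  qed simp
qed

lemma alloc_edge_nonneg:
  assumes "\<And>e. dE e \<ge> 0" shows "alloc_edge Er dE m u v \<ge> 0"
  unfolding alloc_edge_def using assms by (intro sum_nonneg) auto

theorem lemma23:
  fixes VS :: "'v set" and ES :: "('v \<times> 'v) set"
    and VT :: "'t \<Rightarrow> 'v set"
    and dS :: "'v \<times> 'v \<Rightarrow> real" and dSN :: "'t \<Rightarrow> 'v \<Rightarrow> real"
    and R :: "'r set"
    and Vr :: "'r \<Rightarrow> 'n set" and Er :: "'r \<Rightarrow> ('n \<times> 'n) set"
    and tau :: "'r \<Rightarrow> 'n \<Rightarrow> 't"
    and dV :: "'r \<Rightarrow> 'n \<Rightarrow> real" and dE :: "'r \<Rightarrow> 'n \<times> 'n \<Rightarrow> real"
    and Vallow :: "'r \<Rightarrow> 'n \<Rightarrow> 'v set"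
    and Eallow :: "'r \<Rightarrow> 'n \<Rightarrow> 'n \<Rightarrow> ('v \<times> 'v) set"
    and K :: "'r \<Rightarrow> 'k set" and f :: "'r \<Rightarrow> 'k \<Rightarrow> real"
    and m :: "'r \<Rightarrow> 'k \<Rightarrow> ('n, 'v) mapping"
    and u v :: 'v and \<epsilon> \<Delta> \<gamma> :: real
  assumes finite_VS: "finite VS"
    and ES_sub: "ES \<subseteq> VS \<times> VS"
    and VT_sub: "\<And>ty. VT ty \<subseteq> VS"
    and cap_edge_pos: "\<And>e. e \<in> ES \<Longrightarrow> dS e > 0"
    and cap_node_pos: "\<And>ty w. w \<in> VT ty \<Longrightarrow> dSN ty w > 0"
    and finite_R: "finite R"
    and finite_Vr: "\<And>r. r \<in> R \<Longrightarrow> finite (Vr r)"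
    and Er_sub: "\<And>r. r \<in> R \<Longrightarrow> Er r \<subseteq> Vr r \<times> Vr r"
    and dV_nonneg: "\<And>r i. r \<in> R \<Longrightarrow> dV r i \<ge> 0"
    and dE_nonneg: "\<And>r e. r \<in> R \<Longrightarrow> dE r e \<ge> 0"
    and Vallow_sub: "\<And>r i. r \<in> R \<Longrightarrow> i \<in> Vr r \<Longrightarrow> Vallow r i \<subseteq> VT (tau r i)"
    and Eallow_sub: "\<And>r i j. r \<in> R \<Longrightarrow> (i,j) \<in> Er r \<Longrightarrow> Eallow r i j \<subseteq> ES"
    and finite_K: "\<And>r. r \<in> R \<Longrightarrow> finite (K r)"
    and f_pos: "\<And>r k. r \<in> R \<Longrightarrow> k \<in> K r \<Longrightarrow> f r k > 0"
    and f_sum: "\<And>r. r \<in> R \<Longrightarrow> (\<Sum>k\<in>K r. f r k) \<le> 1"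
    and m_valid: "\<And>r k. r \<in> R \<Longrightarrow> k \<in> K r \<Longrightarrow>
                    valid_mapping ES (Vr r) (Er r) (Vallow r) (Eallow r) (m r k)"
    and feas_edge: "\<And>x y. (x,y) \<in> ES \<Longrightarrow>
          (\<Sum>r\<in>R. \<Sum>k\<in>K r. f r k * alloc_edge (Er r) (dE r) (m r k) x y) \<le> dS (x,y)"
    and feas_node: "\<And>ty w. w \<in> VT ty \<Longrightarrow>
          (\<Sum>r\<in>R. \<Sum>k\<in>K r. f r k * alloc_node (Vr r) (tau r) (dV r) (m r k) ty w) \<le> dSN ty w"
    and uv: "(u,v) \<in> ES"
    and eps_pos: "0 < \<epsilon>" and eps_le: "\<epsilon> \<le> 1"
    and eps_bound: "\<And>r. r \<in> R \<Longrightarrow> d_max (Er r) (dE r) (Eallow r) u v / dS (u,v) \<le> \<epsilon>"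
    and Delta_def: "\<Delta> = (\<Sum>r\<in>R. (A_max ES (Vr r) (Er r) (Vallow r) (Eallow r) (dE r) u v
                                  / d_max (Er r) (dE r) (Eallow r) u v) ^ 2)"
    and gamma_def: "\<gamma> = 1 + \<epsilon> * sqrt (2 * \<Delta> * ln (real (card VS)))"
  shows "measure_pmf.prob (joint_selection R K f)
           {\<omega>. (\<Sum>r\<in>R. case \<omega> r of None \<Rightarrow> 0
                          | Some k \<Rightarrow> alloc_edge (Er r) (dE r) (m r k) u v) \<ge> \<gamma> * dS (u,v)}
         \<le> real (card VS) powr (-4)"
proof -
  define al where "al r k = alloc_edge (Er r) (dE r) (m r k) u v" for r k
  define X where "X r \<omega> = (case \<omega> r of None \<Rightarrow> 0 | Some k \<Rightarrow> al r k)" for r and \<omega> :: "'r \<Rightarrow> 'k option"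
  define c where "c r = A_max ES (Vr r) (Er r) (Vallow r) (Eallow r) (dE r) u v" for r
  define dm where "dm r = d_max (Er r) (dE r) (Eallow r) u v" for r
  define J where "J = joint_selection R K f"
  define n where "n = real (card VS)"
  have finEr: "finite (Er r)" if "r \<in> R" for r
    using finite_subset[OF Er_sub[OF that]] finite_Vr[OF that] by auto
  have dSpos: "dS (u,v) > 0" using cap_edge_pos uv by auto
  have al_nn: "al r k \<ge> 0" if "r \<in> R" for r k
    unfolding al_def using dE_nonneg[OF that] by (rule alloc_edge_nonneg)
  have al_le: "al r k \<le> c r" if "r \<in> R" "k \<in> K r" for r k
    unfolding al_def c_def using finEr[OF that(1)] m_valid[OF that] by (rule alloc_edge_le_Amax)
  have al_dm: "al r k \<le> real (card (Er r)) * dm r" if "r \<in> R" "k \<in> K r" for r k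
    unfolding al_def dm_def using finEr[OF that(1)] dE_nonneg[OF that(1)] m_valid[OF that]
    by (rule alloc_edge_le_dmax)
  have c_nn: "c r \<ge> 0" if "r \<in> R" for r
  proof -
    have "{alloc_edge (Er r) (dE r) m u v | m. valid_mapping ES (Vr r) (Er r) (Vallow r) (Eallow r) m}
       \<subseteq> sum (dE r) ` Pow (Er r)" unfolding alloc_edge_def by auto
    hence "finite {alloc_edge (Er r) (dE r) m u v | m. valid_mapping ES (Vr r) (Er r) (Vallow r) (Eallow r) m}"
      by (rule finite_subset) (simp add: finEr[OF that])
    thus ?thesis unfolding c_def A_max_def
      by (intro Max_ge) auto
  qed
  have pmf_sel: "pmf (select_pmf (K r) (f r)) x = (case x of None \<Rightarrow> 1 - (\<Sum>k\<in>K r. f r k)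
     | Some k \<Rightarrow> (if k \<in> K r then f r k else 0))" if "r \<in> R" for r x
    using finite_K[OF that] f_pos[OF that] f_sum[OF that] by (rule pmf_select)
  have set_sel: "set_pmf (select_pmf (K r) (f r)) \<subseteq> insert None (Some ` K r)" if "r \<in> R" for r
  proof
    fix x assume x: "x \<in> set_pmf (select_pmf (K r) (f r))"
    hence "pmf (select_pmf (K r) (f r)) x \<noteq> 0" by (simp add: set_pmf_eq)
    thus "x \<in> insert None (Some ` K r)" using pmf_sel[OF that, of x] by (auto split: option.splits if_splits)
  qed
  have comp: "map_pmf (\<lambda>\<omega>. \<omega> r) J = select_pmf (K r) (f r)" if "r \<in> R" for r
    unfolding J_def joint_selection_def using that by (simp add: Pi_pmf_component finite_R)
  have om: "\<omega> r \<in> insert None (Some ` K r)" if "\<omega> \<in> set_pmf J" "r \<in> R" for \<omega> r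
  proof -
    have "\<omega> r \<in> set_pmf (map_pmf (\<lambda>\<omega>. \<omega> r) J)" using that(1) by auto
    thus ?thesis using comp[OF that(2)] set_sel[OF that(2)] by auto
  qed
  have Xb: "X r \<omega> \<in> {0..c r}" if "\<omega> \<in> set_pmf J" "r \<in> R" for \<omega> r
    using om[OF that] al_le[OF that(2)] al_nn[OF that(2)] c_nn[OF that(2)]
    unfolding X_def by auto
  have EX: "measure_pmf.expectation J (X r) = (\<Sum>k\<in>K r. f r k * al r k)" if r: "r \<in> R" for r
  proof -
    define g where "g x = (case x of None \<Rightarrow> 0 | Some k \<Rightarrow> al r k)" for x
    have "measure_pmf.expectation J (X r) = measure_pmf.expectation J (\<lambda>\<omega>. g (\<omega> r))"
      unfolding X_def g_def by simp
    also have "\<dots> = measure_pmf.expectation (map_pmf (\<lambda>\<omega>. \<omega> r) J) g" by simp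
    also have "\<dots> = measure_pmf.expectation (select_pmf (K r) (f r)) g" using comp[OF r] by simp
    also have "\<dots> = (\<Sum>a\<in>Some ` K r. g a * pmf (select_pmf (K r) (f r)) a)"
      by (rule integral_measure_pmf_real) (use finite_K[OF r] set_sel[OF r] in \<open>auto simp: g_def\<close>)
    also have "\<dots> = (\<Sum>k\<in>K r. f r k * al r k)"
      by (subst sum.reindex) (auto simp: g_def pmf_sel[OF r] intro!: sum.cong)
    finally show ?thesis .
  qed
  define \<mu> where "\<mu> = (\<Sum>r\<in>R. measure_pmf.expectation J (X r))"
  have mu_le: "\<mu> \<le> dS (u,v)"
    using feas_edge[OF uv] unfolding \<mu>_def by (simp add: EX al_def)
  interpret H: Hoeffding_ineq "measure_pmf J" R X "\<lambda>_. 0" c \<mu>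
  proof unfold_locales
    show "finite R" by (rule finite_R)
    have "prob_space.indep_vars (measure_pmf J) (\<lambda>_. borel)
        (\<lambda>r \<omega>. (\<lambda>x. case x of None \<Rightarrow> 0 | Some k \<Rightarrow> al r k) (\<omega> r)) R"
      unfolding J_def joint_selection_def
      by (intro prob_space.indep_vars_compose2[OF _ indep_vars_Pi_pmf])
         (auto simp: measure_pmf.prob_space_axioms finite_R)
    thus "prob_space.indep_vars (measure_pmf J) (\<lambda>_. borel) X R"
      unfolding X_def by simp
    show "\<And>i. i \<in> R \<Longrightarrow> AE x in measure_pmf J. X i x \<in> {0..c i}"
      using Xb by (simp add: AE_measure_pmf_iff)
  qed (simp add: \<mu>_def)
  define S where "S = (\<Sum>r\<in>R. (c r - 0)\<^sup>2)"
  define L where "L = ln n"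
  have uVS: "u \<in> VS" using uv ES_sub by auto
  have n1: "n \<ge> 1" unfolding n_def using finite_VS uVS
    by (metis One_nat_def Suc_leI card_gt_0_iff empty_iff of_nat_1 of_nat_le_iff)
  have L0: "L \<ge> 0" unfolding L_def using n1 by simp
  have Delta0: "\<Delta> \<ge> 0" unfolding Delta_def by (intro sum_nonneg) auto
  have gamma1: "\<gamma> \<ge> 1" unfolding gamma_def using eps_pos Delta0 L0 n1
    by (simp add: L_def n_def)
  have cr: "(c r)\<^sup>2 \<le> \<epsilon>\<^sup>2 * (dS (u,v))\<^sup>2 * (c r / dm r)\<^sup>2" if r: "r \<in> R" for r
  proof (cases "dm r = 0")
    case True
    have "c r \<le> real (card (Er r)) * dm r" unfolding c_def dm_def
      by (rule Amax_le_dmax[OF finEr[OF r]]) (rule dE_nonneg[OF r])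
    hence "c r \<le> 0" using True by simp
    hence "c r = 0" using c_nn[OF r] by simp
    thus ?thesis by simp
  next
    case False
    have finD: "finite {dE r (i,j) | i j. (i,j) \<in> Er r \<and> (u,v) \<in> Eallow r i j}"
      by (rule finite_subset[OF _ finite_imageI[OF finEr[OF r], of "dE r"]]) auto
    have dmnn: "dm r \<ge> 0" unfolding dm_def d_max_def
      using finD by (intro Max_ge) auto
    hence dmp: "dm r > 0" using False by simp
    have "dm r \<le> \<epsilon> * dS (u,v)" using eps_bound[OF r] dSpos
      unfolding dm_def by (simp add: divide_le_eq)
    have "c r = (c r / dm r) * dm r" using dmp by simp
    also have "\<dots> \<le> (c r / dm r) * (\<epsilon> * dS (u,v))"
      using \<open>dm r \<le> \<epsilon> * dS (u,v)\<close> c_nn[OF r] dmp by (intro mult_left_mono) auto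
    finally have "(c r)\<^sup>2 \<le> ((c r / dm r) * (\<epsilon> * dS (u,v)))\<^sup>2"
      using c_nn[OF r] by (intro power_mono) auto
    also have "((c r / dm r) * (\<epsilon> * dS (u,v)))\<^sup>2 = \<epsilon>\<^sup>2 * (dS (u,v))\<^sup>2 * (c r / dm r)\<^sup>2"
      by (simp only: power_mult_distrib mult_ac)
    finally show ?thesis .
  qed
  have S_le: "S \<le> \<epsilon>\<^sup>2 * (dS (u,v))\<^sup>2 * \<Delta>"
  proof -
    have "S \<le> (\<Sum>r\<in>R. \<epsilon>\<^sup>2 * (dS (u,v))\<^sup>2 * (c r / dm r)\<^sup>2)"
      unfolding S_def using cr by (intro sum_mono) auto
    also have "\<dots> = \<epsilon>\<^sup>2 * (dS (u,v))\<^sup>2 * \<Delta>"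
      unfolding Delta_def c_def dm_def by (simp add: sum_distrib_left)
    finally show ?thesis .
  qed
  have ev: "{\<omega>. (\<Sum>r\<in>R. case \<omega> r of None \<Rightarrow> 0
                          | Some k \<Rightarrow> alloc_edge (Er r) (dE r) (m r k) u v) \<ge> \<gamma> * dS (u,v)}
          = {\<omega>. (\<Sum>r\<in>R. X r \<omega>) \<ge> \<gamma> * dS (u,v)}"
    unfolding X_def al_def by simp
  have pow0: "n powr (-4) \<ge> 0" by simp
  show ?thesis
  proof (cases "S = 0")
    case True
    have c0: "c r = 0" if "r \<in> R" for r
      using True c_nn unfolding S_def
      by (subst (asm) sum_nonneg_eq_0_iff) (use finite_R that in auto)
    have "{\<omega>. (\<Sum>r\<in>R. X r \<omega>) \<ge> \<gamma> * dS (u,v)} \<inter> set_pmf J = {}"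
    proof (rule ccontr)
      assume "\<not> ?thesis"
      then obtain \<omega> where w: "\<omega> \<in> set_pmf J" "(\<Sum>r\<in>R. X r \<omega>) \<ge> \<gamma> * dS (u,v)" by auto
      have "(\<Sum>r\<in>R. X r \<omega>) \<le> 0" using Xb[OF w(1)] c0 by (intro sum_nonpos) auto
      moreover have "\<gamma> * dS (u,v) > 0" using gamma1 dSpos by simp
      ultimately show False using w(2) by simp
    qed
    hence "measure_pmf.prob J {\<omega>. (\<Sum>r\<in>R. X r \<omega>) \<ge> \<gamma> * dS (u,v)} = 0"
      by (metis measure_Int_set_pmf measure_empty)
    thus ?thesis using pow0 unfolding ev J_def[symmetric] n_def[symmetric] by simp
  next
    case False
    have Spos: "S > 0" using False unfolding S_def by (simp add: sum_nonneg order_le_neq_trans)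
    define t where "t = (\<gamma> - 1) * dS (u,v)"
    have t0: "t \<ge> 0" unfolding t_def using gamma1 dSpos by simp
    have "measure_pmf.prob J {\<omega>. (\<Sum>r\<in>R. X r \<omega>) \<ge> \<gamma> * dS (u,v)}
        \<le> measure_pmf.prob J {x\<in>space (measure_pmf J). (\<Sum>i\<in>R. X i x) \<ge> \<mu> + t}"
      using mu_le by (intro measure_pmf.finite_measure_mono) (auto simp: t_def algebra_simps)
    also have "\<dots> \<le> exp (-2 * t\<^sup>2 / S)"
      using H.Hoeffding_ineq_ge[OF t0] Spos unfolding S_def by simp
    also have "\<dots> \<le> n powr (-4)"
    proof -
      have t2: "t\<^sup>2 = \<epsilon>\<^sup>2 * (2 * \<Delta> * L) * (dS (u,v))\<^sup>2"
        unfolding t_def gamma_def L_def n_def using Delta0 L0 eps_pos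
        by (simp add: power_mult_distrib L_def n_def)
      have "4 * L * S \<le> 4 * L * (\<epsilon>\<^sup>2 * (dS (u,v))\<^sup>2 * \<Delta>)"
        using S_le L0 by (intro mult_left_mono) auto
      also have "\<dots> = 2 * t\<^sup>2" unfolding t2 by (simp add: algebra_simps)
      finally have "4 * L \<le> 2 * t\<^sup>2 / S" using Spos by (simp add: pos_le_divide_eq)
      hence "-2 * t\<^sup>2 / S \<le> -4 * L" by simp
      hence "exp (-2 * t\<^sup>2 / S) \<le> exp (-4 * L)" by simp
      also have "exp (-4 * L) = n powr (-4)" unfolding L_def powr_def using n1 by simp
      finally show ?thesis .
    qed
    finally show ?thesis unfolding ev J_def[symmetric] n_def[symmetric] .
  qed
qed

end
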